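(* Let $(\mathbf{X}^0,\mathbf{p})$ be a pEF1 $\{1,k\}$-payment equilibrium. If $(\mathbf{X}^0,\mathbf{p})$ is not $(2-1/k)$-pEFX, then $\min_{i\in N_L}p(X^0_i)<k$.
   Context: Fix $k>1$. Agents $N$, chores $M$, additive costs $c_i(e)\in\{1,k\}$. An allocation partitions $M$ into bundles. A payment vector assigns $p(e)>0$, $p(X)=\sum_{e\in X}p(e)$; $\alpha_{i,e}=c_i(e)/p(e)$, $\alpha_i=\min_e\alpha_{i,e}$, $\mathsf{MPB}_i=\{e:\alpha_{i,e}=\alpha_i\}$; $(\mathbf{X},\mathbf{p})$ is a $\{1,k\}$-payment equilibrium if $X_i\subseteq\mathsf{MPB}_i$ for all $i$ and $p(e)\in\{1,k\}$ for all $e$. It is pEF1 if for all $i,j$, $X_i=\emptyset$ or some $e\in X_i$ has $p(X_i\setminus\{e\})\le p(X_j)$; it is $\beta$-pEFX if for all $i,j$, $X_i=\emptyset$ or $p(X_i\setminus\{e\})\le\beta\,p(X_j)$ for all $e\in X_i$. $L=\{e:p(e)=1\}$, $N_L=\{i:X^0_i\subseteq L\}$. *)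

theory Defs
  imports Complex_Main
begin

definition bivalued_instance :: "real \<Rightarrow> 'a set \<Rightarrow> 'b set \<Rightarrow> ('a \<Rightarrow> 'b \<Rightarrow> real) \<Rightarrow> bool" where
  "bivalued_instance k N M c \<longleftrightarrow> k > 1 \<and> finite N \<and> N \<noteq> {} \<and> finite M \<and>
     (\<forall>i\<in>N. \<forall>e\<in>M. c i e \<in> {1, k})"

definition is_allocation :: "'a set \<Rightarrow> 'b set \<Rightarrow> ('a \<Rightarrow> 'b set) \<Rightarrow> bool" where
  "is_allocation N M X \<longleftrightarrow> (\<forall>i\<in>N. X i \<subseteq> M) \<and> (\<Union>i\<in>N. X i) = M \<and>
     (\<forall>i\<in>N. \<forall>j\<in>N. i \<noteq> j \<longrightarrow> X i \<inter> X j = {})"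

definition pay :: "('b \<Rightarrow> real) \<Rightarrow> 'b set \<Rightarrow> real" where
  "pay p S = (\<Sum>e\<in>S. p e)"

definition alpha_ie :: "('a \<Rightarrow> 'b \<Rightarrow> real) \<Rightarrow> ('b \<Rightarrow> real) \<Rightarrow> 'a \<Rightarrow> 'b \<Rightarrow> real" where
  "alpha_ie c p i e = c i e / p e"

definition alpha_i :: "'b set \<Rightarrow> ('a \<Rightarrow> 'b \<Rightarrow> real) \<Rightarrow> ('b \<Rightarrow> real) \<Rightarrow> 'a \<Rightarrow> real" where
  "alpha_i M c p i = Min ((\<lambda>e. alpha_ie c p i e) ` M)"

definition MPB :: "'b set \<Rightarrow> ('a \<Rightarrow> 'b \<Rightarrow> real) \<Rightarrow> ('b \<Rightarrow> real) \<Rightarrow> 'a \<Rightarrow> 'b set" where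
  "MPB M c p i = {e\<in>M. alpha_ie c p i e = alpha_i M c p i}"

definition payment_equilibrium_1k ::
  "real \<Rightarrow> 'a set \<Rightarrow> 'b set \<Rightarrow> ('a \<Rightarrow> 'b \<Rightarrow> real) \<Rightarrow> ('a \<Rightarrow> 'b set) \<Rightarrow> ('b \<Rightarrow> real) \<Rightarrow> bool" where
  "payment_equilibrium_1k k N M c X p \<longleftrightarrow> is_allocation N M X \<and>
     (\<forall>e\<in>M. p e > 0 \<and> p e \<in> {1, k}) \<and>
     (\<forall>i\<in>N. X i \<subseteq> MPB M c p i)"

definition pEF1 :: "'a set \<Rightarrow> ('a \<Rightarrow> 'b set) \<Rightarrow> ('b \<Rightarrow> real) \<Rightarrow> bool" where
  "pEF1 N X p \<longleftrightarrow> (\<forall>i\<in>N. \<forall>j\<in>N. X i = {} \<or>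
      (\<exists>e\<in>X i. pay p (X i - {e}) \<le> pay p (X j)))"

definition pEFX :: "real \<Rightarrow> 'a set \<Rightarrow> ('a \<Rightarrow> 'b set) \<Rightarrow> ('b \<Rightarrow> real) \<Rightarrow> bool" where
  "pEFX \<beta> N X p \<longleftrightarrow> (\<forall>i\<in>N. \<forall>j\<in>N. X i = {} \<or>
      (\<forall>e\<in>X i. pay p (X i - {e}) \<le> \<beta> * pay p (X j)))"

definition low_chores :: "'b set \<Rightarrow> ('b \<Rightarrow> real) \<Rightarrow> 'b set" where
  "low_chores M p = {e\<in>M. p e = 1}"

definition N_L :: "'a set \<Rightarrow> 'b set \<Rightarrow> ('a \<Rightarrow> 'b set) \<Rightarrow> ('b \<Rightarrow> real) \<Rightarrow> 'a set" where
  "N_L N M X p = {i\<in>N. X i \<subseteq> low_chores M p}"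

end

theory Submission
  imports Defs
begin

theorem lemma8:
  fixes k :: real and N :: "'a set" and M :: "'b set"
    and c :: "'a \<Rightarrow> 'b \<Rightarrow> real" and X :: "'a \<Rightarrow> 'b set" and p :: "'b \<Rightarrow> real"
  assumes "bivalued_instance k N M c"
    and "payment_equilibrium_1k k N M c X p"
    and "pEF1 N X p"
    and "\<not> pEFX (2 - 1 / k) N X p"
  shows "N_L N M X p \<noteq> {} \<and> Min ((\<lambda>i. pay p (X i)) ` N_L N M X p) < k"
proof -
  have k1: "k > 1" and finN: "finite N" and finM: "finite M"
    using assms(1) unfolding bivalued_instance_def by auto
  have sub: "\<And>i. i \<in> N \<Longrightarrow> X i \<subseteq> M"
    using assms(2) unfolding payment_equilibrium_1k_def is_allocation_def by auto
  have pr: "\<And>e. e \<in> M \<Longrightarrow> p e = 1 \<or> p e = k"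
    using assms(2) unfolding payment_equilibrium_1k_def by auto
  have ppos: "\<And>e. e \<in> M \<Longrightarrow> p e > 0"
    using assms(2) unfolding payment_equilibrium_1k_def by auto
  obtain i j e where ij: "i \<in> N" "j \<in> N" "X i \<noteq> {}" "e \<in> X i"
    and bad: "pay p (X i - {e}) > (2 - 1/k) * pay p (X j)"
    using assms(4) unfolding pEFX_def by force
  obtain e' where e': "e' \<in> X i" "pay p (X i - {e'}) \<le> pay p (X j)"
    using assms(3) ij unfolding pEF1_def by blast
  have fi: "finite (X i)" using sub[OF ij(1)] finM finite_subset by blast
  have fj: "finite (X j)" using sub[OF ij(2)] finM finite_subset by blast
  define P where "P = pay p (X i)"
  define q where "q = pay p (X j)"
  have q0: "q \<ge> 0" unfolding q_def pay_def
    using sub[OF ij(2)] ppos by (intro sum_nonneg) (auto simp: less_imp_le)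
  have d1: "pay p (X i - {e}) = P - p e" unfolding P_def pay_def
    using fi ij(4) by (simp add: sum_diff1)
  have d2: "pay p (X i - {e'}) = P - p e'" unfolding P_def pay_def
    using fi e'(1) by (simp add: sum_diff1)
  have pe': "p e' \<le> k" using pr[of e'] sub[OF ij(1)] e'(1) k1 by force
  have A: "P - p e > (2 - 1/k) * q" using bad d1 q_def by simp
  have B: "P - k \<le> q" using e'(2) d2 pe' q_def by simp
  have ge: "(2 - 1/k) * q \<ge> q"
  proof -
    have "q / k \<le> q" using q0 k1 by (simp add: divide_le_eq mult_le_cancel_left1)
    then show ?thesis by (simp add: algebra_simps)
  qed
  have pe1: "p e = 1"
  proof (rule ccontr)
    assume "p e \<noteq> 1"
    then have "p e = k" using pr[of e] sub[OF ij(1)] ij(4) by auto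
    then show False using A B ge by simp
  qed
  have "(1 - 1/k) * q < k - 1" using A B pe1 by (simp add: algebra_simps)
  then have "(k - 1) * q < k * (k - 1)" using k1
    by (simp add: field_simps)
  then have qk: "q < k" using k1
    by (smt (verit) mult.commute mult_le_cancel_left_pos)
  have jL: "j \<in> N_L N M X p"
  proof -
    have "\<forall>x\<in>X j. p x = 1"
    proof
      fix x assume x: "x \<in> X j"
      show "p x = 1"
      proof (rule ccontr)
        assume "p x \<noteq> 1"
        then have "p x = k" using pr sub[OF ij(2)] x by auto
        moreover have "p x \<le> q" unfolding q_def pay_def
          using fj x sub[OF ij(2)] ppos
          by (intro member_le_sum) (auto simp: less_imp_le)
        ultimately show False using qk by simp
      qed
    qed
    then show ?thesis using ij(2) sub[OF ij(2)]
      unfolding N_L_def low_chores_def by auto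
  qed
  have fin: "finite (N_L N M X p)" using finN unfolding N_L_def by simp
  have "Min ((\<lambda>i. pay p (X i)) ` N_L N M X p) \<le> q"
    unfolding q_def using fin jL by (intro Min_le) auto
  then show ?thesis using jL qk by auto
qed

end
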